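(* Let $\mathcal B$ be an extriangulated category with enough projectives and enough injectives, and let $(\mathcal C,\mathcal C^{\perp_1})$ be a cotorsion pair. Then every object $X$ admits: a conflation $X\overset{t}{\rightarrowtail}T_0\twoheadrightarrow C_0$ with $T_0\in\mathcal C^{\perp_1}$, $C_0\in\mathcal C$; a conflation $Y_0\overset{y_0}{\rightarrowtail}P_0\overset{p_0}{\twoheadrightarrow}T_0$ with $P_0$ projective; a conflation $U_0\overset{u_0}{\rightarrowtail}P_0\twoheadrightarrow C_0$ (so $U_0\in\Omega\mathcal C$); and a conflation $Y_0\overset{g_0}{\rightarrowtail}U_0\overset{f_0}{\twoheadrightarrow}X$, such that $u_0g_0=y_0$ and $tf_0=p_0u_0$, and such that $f_0$ is a right $\Omega\mathcal C$-approximation of $X$. Moreover, if $B$ is an object with $\mathbb E(T_0,B)=0$, then $\operatorname{Hom}_{\mathcal B}(g_0,B):\operatorname{Hom}_{\mathcal B}(U_0,B)\to\operatorname{Hom}_{\mathcal B}(Y_0,B)$ is surjective.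
   Context: $(\mathcal B,\mathbb E,\mathfrak s)$ is an extriangulated category (Nakaoka–Palu); conflations $A\rightarrowtail B\twoheadrightarrow C$. Subcategories are full, additive, closed under isomorphisms and finite direct sums. $\mathcal P$ = projectives. $\mathcal C^{\perp_1}=\{B\mid\mathbb E(\mathcal C,B)=0\}$. $\Omega\mathcal C=\operatorname{CoCone}(\mathcal P,\mathcal C)$ is the class of objects $U$ admitting a conflation $U\rightarrowtail P\twoheadrightarrow C$ with $P\in\mathcal P$, $C\in\mathcal C$. A cotorsion pair $(\mathcal U,\mathcal V)$: subcategories closed under summands with $\mathbb E(\mathcal U,\mathcal V)=0$ and every $B$ admits conflations $V_B\rightarrowtail U_B\twoheadrightarrow B$, $B\rightarrowtail V^B\twoheadrightarrow U^B$ with $U_B,U^B\in\mathcal U$, $V_B,V^B\in\mathcal V$. *)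

theory Defs
  imports Main
begin

text \<open>Morphisms carry a domain and codomain; the extension groups are
  Ext C A = E(C,A) (contravariant in C, covariant in A).
  push C a d = a_* d for d in E(C, Dom a);  pull A c d = c^* d for d in E(Cod c, A).
  realizes d x y means that the sequence A -x-> Bm -y-> C belongs to the
  equivalence class s(d), where d is in E(C,A).\<close>

record ('o,'m,'e) extri =
  Ob :: "'o set"
  Mor :: "'m set"
  Dom :: "'m \<Rightarrow> 'o"
  Cod :: "'m \<Rightarrow> 'o"
  cmp :: "'m \<Rightarrow> 'm \<Rightarrow> 'm"
  idm :: "'o \<Rightarrow> 'm"
  mzero :: "'o \<Rightarrow> 'o \<Rightarrow> 'm"
  madd :: "'m \<Rightarrow> 'm \<Rightarrow> 'm"
  mneg :: "'m \<Rightarrow> 'm"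
  Ext :: "'o \<Rightarrow> 'o \<Rightarrow> 'e set"
  ezero :: "'o \<Rightarrow> 'o \<Rightarrow> 'e"
  eadd :: "'o \<Rightarrow> 'o \<Rightarrow> 'e \<Rightarrow> 'e \<Rightarrow> 'e"
  eneg :: "'o \<Rightarrow> 'o \<Rightarrow> 'e \<Rightarrow> 'e"
  push :: "'o \<Rightarrow> 'm \<Rightarrow> 'e \<Rightarrow> 'e"
  pull :: "'o \<Rightarrow> 'm \<Rightarrow> 'e \<Rightarrow> 'e"
  realizes :: "'e \<Rightarrow> 'm \<Rightarrow> 'm \<Rightarrow> bool"

definition hom :: "('o,'m,'e) extri \<Rightarrow> 'o \<Rightarrow> 'o \<Rightarrow> 'm set" where
  "hom B X Y = {f \<in> Mor B. Dom B f = X \<and> Cod B f = Y}"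

definition category :: "('o,'m,'e) extri \<Rightarrow> bool" where
  "category B \<longleftrightarrow>
     (\<forall>f\<in>Mor B. Dom B f \<in> Ob B \<and> Cod B f \<in> Ob B) \<and>
     (\<forall>X\<in>Ob B. idm B X \<in> hom B X X) \<and>
     (\<forall>X Y Z f g. f \<in> hom B X Y \<longrightarrow> g \<in> hom B Y Z \<longrightarrow> cmp B g f \<in> hom B X Z) \<and>
     (\<forall>X Y f. f \<in> hom B X Y \<longrightarrow> cmp B f (idm B X) = f \<and> cmp B (idm B Y) f = f) \<and>
     (\<forall>W X Y Z f g h. f \<in> hom B W X \<longrightarrow> g \<in> hom B X Y \<longrightarrow> h \<in> hom B Y Z \<longrightarrow>
        cmp B h (cmp B g f) = cmp B (cmp B h g) f)"

definition preadditive :: "('o,'m,'e) extri \<Rightarrow> bool" where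
  "preadditive B \<longleftrightarrow> category B \<and>
     (\<forall>X\<in>Ob B. \<forall>Y\<in>Ob B.
        mzero B X Y \<in> hom B X Y \<and>
        (\<forall>f\<in>hom B X Y. \<forall>g\<in>hom B X Y. madd B f g \<in> hom B X Y) \<and>
        (\<forall>f\<in>hom B X Y. mneg B f \<in> hom B X Y) \<and>
        (\<forall>f\<in>hom B X Y. \<forall>g\<in>hom B X Y. \<forall>h\<in>hom B X Y.
            madd B (madd B f g) h = madd B f (madd B g h)) \<and>
        (\<forall>f\<in>hom B X Y. \<forall>g\<in>hom B X Y. madd B f g = madd B g f) \<and>
        (\<forall>f\<in>hom B X Y. madd B f (mzero B X Y) = f) \<and>
        (\<forall>f\<in>hom B X Y. madd B f (mneg B f) = mzero B X Y)) \<and>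
     (\<forall>X Y Z f g g'. f \<in> hom B X Y \<longrightarrow> g \<in> hom B Y Z \<longrightarrow> g' \<in> hom B Y Z \<longrightarrow>
        cmp B (madd B g g') f = madd B (cmp B g f) (cmp B g' f)) \<and>
     (\<forall>X Y Z f f' h. f \<in> hom B X Y \<longrightarrow> f' \<in> hom B X Y \<longrightarrow> h \<in> hom B Y Z \<longrightarrow>
        cmp B h (madd B f f') = madd B (cmp B h f) (cmp B h f'))"

definition is_zero_obj :: "('o,'m,'e) extri \<Rightarrow> 'o \<Rightarrow> bool" where
  "is_zero_obj B Z \<longleftrightarrow> Z \<in> Ob B \<and>
     (\<forall>X\<in>Ob B. hom B Z X = {mzero B Z X} \<and> hom B X Z = {mzero B X Z})"

definition is_biprod :: "('o,'m,'e) extri \<Rightarrow> 'o \<Rightarrow> 'o \<Rightarrow> 'o \<Rightarrow> 'm \<Rightarrow> 'm \<Rightarrow> 'm \<Rightarrow> 'm \<Rightarrow> bool" where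
  "is_biprod B X Y S i1 i2 p1 p2 \<longleftrightarrow> S \<in> Ob B \<and>
     i1 \<in> hom B X S \<and> i2 \<in> hom B Y S \<and> p1 \<in> hom B S X \<and> p2 \<in> hom B S Y \<and>
     cmp B p1 i1 = idm B X \<and> cmp B p2 i2 = idm B Y \<and>
     cmp B p1 i2 = mzero B Y X \<and> cmp B p2 i1 = mzero B X Y \<and>
     madd B (cmp B i1 p1) (cmp B i2 p2) = idm B S"

definition additive :: "('o,'m,'e) extri \<Rightarrow> bool" where
  "additive B \<longleftrightarrow> preadditive B \<and> (\<exists>Z. is_zero_obj B Z) \<and>
     (\<forall>X\<in>Ob B. \<forall>Y\<in>Ob B. \<exists>S i1 i2 p1 p2. is_biprod B X Y S i1 i2 p1 p2)"

definition iso :: "('o,'m,'e) extri \<Rightarrow> 'm \<Rightarrow> 'o \<Rightarrow> 'o \<Rightarrow> bool" where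
  "iso B f X Y \<longleftrightarrow> f \<in> hom B X Y \<and>
     (\<exists>g\<in>hom B Y X. cmp B g f = idm B X \<and> cmp B f g = idm B Y)"

definition ET1 :: "('o,'m,'e) extri \<Rightarrow> bool" where
  "ET1 B \<longleftrightarrow>
     (\<forall>C\<in>Ob B. \<forall>A\<in>Ob B.
        ezero B C A \<in> Ext B C A \<and>
        (\<forall>d\<in>Ext B C A. \<forall>d'\<in>Ext B C A. eadd B C A d d' \<in> Ext B C A) \<and>
        (\<forall>d\<in>Ext B C A. eneg B C A d \<in> Ext B C A) \<and>
        (\<forall>d\<in>Ext B C A. \<forall>d'\<in>Ext B C A. \<forall>d''\<in>Ext B C A.
           eadd B C A (eadd B C A d d') d'' = eadd B C A d (eadd B C A d' d'')) \<and>
        (\<forall>d\<in>Ext B C A. \<forall>d'\<in>Ext B C A. eadd B C A d d' = eadd B C A d' d) \<and>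
        (\<forall>d\<in>Ext B C A. eadd B C A d (ezero B C A) = d) \<and>
        (\<forall>d\<in>Ext B C A. eadd B C A d (eneg B C A d) = ezero B C A)) \<and>
     (\<forall>C A A' a d. C \<in> Ob B \<longrightarrow> a \<in> hom B A A' \<longrightarrow> d \<in> Ext B C A \<longrightarrow>
        push B C a d \<in> Ext B C A') \<and>
     (\<forall>A C C' c d. A \<in> Ob B \<longrightarrow> c \<in> hom B C' C \<longrightarrow> d \<in> Ext B C A \<longrightarrow>
        pull B A c d \<in> Ext B C' A) \<and>
     (\<forall>C A d. C \<in> Ob B \<longrightarrow> A \<in> Ob B \<longrightarrow> d \<in> Ext B C A \<longrightarrow>
        push B C (idm B A) d = d \<and> pull B A (idm B C) d = d) \<and>
     (\<forall>C A A' A'' a a' d. C \<in> Ob B \<longrightarrow> a \<in> hom B A A' \<longrightarrow> a' \<in> hom B A' A'' \<longrightarrow>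
        d \<in> Ext B C A \<longrightarrow> push B C (cmp B a' a) d = push B C a' (push B C a d)) \<and>
     (\<forall>A C C' C'' c c' d. A \<in> Ob B \<longrightarrow> c \<in> hom B C' C \<longrightarrow> c' \<in> hom B C'' C' \<longrightarrow>
        d \<in> Ext B C A \<longrightarrow> pull B A (cmp B c c') d = pull B A c' (pull B A c d)) \<and>
     (\<forall>A A' C C' a c d. a \<in> hom B A A' \<longrightarrow> c \<in> hom B C' C \<longrightarrow> d \<in> Ext B C A \<longrightarrow>
        push B C' a (pull B A c d) = pull B A' c (push B C a d)) \<and>
     (\<forall>C A A' a d d'. C \<in> Ob B \<longrightarrow> a \<in> hom B A A' \<longrightarrow> d \<in> Ext B C A \<longrightarrow> d' \<in> Ext B C A \<longrightarrow>
        push B C a (eadd B C A d d') = eadd B C A' (push B C a d) (push B C a d')) \<and>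
     (\<forall>A C C' c d d'. A \<in> Ob B \<longrightarrow> c \<in> hom B C' C \<longrightarrow> d \<in> Ext B C A \<longrightarrow> d' \<in> Ext B C A \<longrightarrow>
        pull B A c (eadd B C A d d') = eadd B C' A (pull B A c d) (pull B A c d')) \<and>
     (\<forall>C A A' a a' d. C \<in> Ob B \<longrightarrow> a \<in> hom B A A' \<longrightarrow> a' \<in> hom B A A' \<longrightarrow> d \<in> Ext B C A \<longrightarrow>
        push B C (madd B a a') d = eadd B C A' (push B C a d) (push B C a' d)) \<and>
     (\<forall>A C C' c c' d. A \<in> Ob B \<longrightarrow> c \<in> hom B C' C \<longrightarrow> c' \<in> hom B C' C \<longrightarrow> d \<in> Ext B C A \<longrightarrow>
        pull B A (madd B c c') d = eadd B C' A (pull B A c d) (pull B A c' d))"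

definition seq_equiv :: "('o,'m,'e) extri \<Rightarrow> 'm \<Rightarrow> 'm \<Rightarrow> 'm \<Rightarrow> 'm \<Rightarrow> bool" where
  "seq_equiv B x y x' y' \<longleftrightarrow>
     (\<exists>b. iso B b (Cod B x) (Cod B x') \<and> cmp B b x = x' \<and> cmp B y' b = y)"

definition ET2 :: "('o,'m,'e) extri \<Rightarrow> bool" where
  "ET2 B \<longleftrightarrow>
     (\<forall>d x y. realizes B d x y \<longrightarrow>
        (\<exists>A Bm C. x \<in> hom B A Bm \<and> y \<in> hom B Bm C \<and> d \<in> Ext B C A)) \<and>
     (\<forall>C\<in>Ob B. \<forall>A\<in>Ob B. \<forall>d\<in>Ext B C A.
        \<exists>Bm x y. x \<in> hom B A Bm \<and> y \<in> hom B Bm C \<and> realizes B d x y) \<and>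
     (\<forall>d x y x' y'. realizes B d x y \<longrightarrow> realizes B d x' y' \<longrightarrow>
        Dom B x = Dom B x' \<longrightarrow> Cod B y = Cod B y' \<longrightarrow> seq_equiv B x y x' y') \<and>
     (\<forall>d x y x' y'. realizes B d x y \<longrightarrow> x' \<in> Mor B \<longrightarrow> y' \<in> Mor B \<longrightarrow>
        Dom B x = Dom B x' \<longrightarrow> Cod B y = Cod B y' \<longrightarrow> seq_equiv B x y x' y' \<longrightarrow>
        realizes B d x' y') \<and>
     (\<forall>A Bm C A' Bm' C' x y x' y' d d' a c.
        x \<in> hom B A Bm \<longrightarrow> y \<in> hom B Bm C \<longrightarrow> x' \<in> hom B A' Bm' \<longrightarrow> y' \<in> hom B Bm' C' \<longrightarrow>
        realizes B d x y \<longrightarrow> realizes B d' x' y' \<longrightarrow>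
        a \<in> hom B A A' \<longrightarrow> c \<in> hom B C C' \<longrightarrow> push B C a d = pull B A' c d' \<longrightarrow>
        (\<exists>b\<in>hom B Bm Bm'. cmp B b x = cmp B x' a \<and> cmp B y' b = cmp B c y)) \<and>
     (\<forall>A C S i1 i2 p1 p2. A \<in> Ob B \<longrightarrow> C \<in> Ob B \<longrightarrow> is_biprod B A C S i1 i2 p1 p2 \<longrightarrow>
        realizes B (ezero B C A) i1 p2) \<and>
     (\<forall>A Bm C A' Bm' C' x y x' y' d d'
         SA iA iA' pA pA' SB jB jB' qB qB' SC kC kC' rC rC' e.
        x \<in> hom B A Bm \<longrightarrow> y \<in> hom B Bm C \<longrightarrow> x' \<in> hom B A' Bm' \<longrightarrow> y' \<in> hom B Bm' C' \<longrightarrow>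
        realizes B d x y \<longrightarrow> realizes B d' x' y' \<longrightarrow>
        is_biprod B A A' SA iA iA' pA pA' \<longrightarrow>
        is_biprod B Bm Bm' SB jB jB' qB qB' \<longrightarrow>
        is_biprod B C C' SC kC kC' rC rC' \<longrightarrow>
        e \<in> Ext B SC SA \<longrightarrow>
        push B C pA (pull B SA kC e) = d \<longrightarrow>
        push B C' pA' (pull B SA kC' e) = d' \<longrightarrow>
        push B C' pA (pull B SA kC' e) = ezero B C' A \<longrightarrow>
        push B C pA' (pull B SA kC e) = ezero B C A' \<longrightarrow>
        realizes B e (madd B (cmp B jB (cmp B x pA)) (cmp B jB' (cmp B x' pA')))
                     (madd B (cmp B kC (cmp B y qB)) (cmp B kC' (cmp B y' qB'))))"

definition ET3 :: "('o,'m,'e) extri \<Rightarrow> bool" where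
  "ET3 B \<longleftrightarrow>
     (\<forall>A Bm C A' Bm' C' x y x' y' d d' a b.
        x \<in> hom B A Bm \<longrightarrow> y \<in> hom B Bm C \<longrightarrow> x' \<in> hom B A' Bm' \<longrightarrow> y' \<in> hom B Bm' C' \<longrightarrow>
        realizes B d x y \<longrightarrow> realizes B d' x' y' \<longrightarrow>
        a \<in> hom B A A' \<longrightarrow> b \<in> hom B Bm Bm' \<longrightarrow> cmp B b x = cmp B x' a \<longrightarrow>
        (\<exists>c\<in>hom B C C'. cmp B c y = cmp B y' b \<and> push B C a d = pull B A' c d'))"

definition ET3op :: "('o,'m,'e) extri \<Rightarrow> bool" where
  "ET3op B \<longleftrightarrow>
     (\<forall>A Bm C A' Bm' C' x y x' y' d d' b c.
        x \<in> hom B A Bm \<longrightarrow> y \<in> hom B Bm C \<longrightarrow> x' \<in> hom B A' Bm' \<longrightarrow> y' \<in> hom B Bm' C' \<longrightarrow>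
        realizes B d x y \<longrightarrow> realizes B d' x' y' \<longrightarrow>
        b \<in> hom B Bm Bm' \<longrightarrow> c \<in> hom B C C' \<longrightarrow> cmp B c y = cmp B y' b \<longrightarrow>
        (\<exists>a\<in>hom B A A'. cmp B b x = cmp B x' a \<and> push B C a d = pull B A' c d'))"

definition ET4 :: "('o,'m,'e) extri \<Rightarrow> bool" where
  "ET4 B \<longleftrightarrow>
     (\<forall>A Bo C D F f f' g g' d d'.
        f \<in> hom B A Bo \<longrightarrow> f' \<in> hom B Bo D \<longrightarrow> g \<in> hom B Bo C \<longrightarrow> g' \<in> hom B C F \<longrightarrow>
        realizes B d f f' \<longrightarrow> realizes B d' g g' \<longrightarrow>
        (\<exists>E h' dd e d''. E \<in> Ob B \<and> h' \<in> hom B C E \<and> dd \<in> hom B D E \<and> e \<in> hom B E F \<and>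
           d'' \<in> Ext B E A \<and>
           realizes B d'' (cmp B g f) h' \<and>
           realizes B (push B F f' d') dd e \<and>
           pull B A dd d'' = d \<and>
           push B E f d'' = pull B Bo e d' \<and>
           cmp B dd f' = cmp B h' g \<and> cmp B e h' = g'))"

definition ET4op :: "('o,'m,'e) extri \<Rightarrow> bool" where
  "ET4op B \<longleftrightarrow>
     (\<forall>D A Bo F C f f' g g' d d'.
        f \<in> hom B D A \<longrightarrow> f' \<in> hom B A Bo \<longrightarrow> g \<in> hom B F Bo \<longrightarrow> g' \<in> hom B Bo C \<longrightarrow>
        realizes B d f f' \<longrightarrow> realizes B d' g g' \<longrightarrow>
        (\<exists>E h dd e d''. E \<in> Ob B \<and> h \<in> hom B E A \<and> dd \<in> hom B D E \<and> e \<in> hom B E F \<and>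
           d'' \<in> Ext B C E \<and>
           realizes B d'' h (cmp B g' f') \<and>
           realizes B (pull B D g d) dd e \<and>
           d' = push B C e d'' \<and>
           push B Bo dd d = pull B E g' d'' \<and>
           cmp B h dd = f \<and> cmp B f' h = cmp B g e))"

definition extriangulated :: "('o,'m,'e) extri \<Rightarrow> bool" where
  "extriangulated B \<longleftrightarrow> additive B \<and> ET1 B \<and> ET2 B \<and> ET3 B \<and> ET3op B \<and> ET4 B \<and> ET4op B"

definition conflation :: "('o,'m,'e) extri \<Rightarrow> 'o \<Rightarrow> 'o \<Rightarrow> 'o \<Rightarrow> 'm \<Rightarrow> 'm \<Rightarrow> bool" where
  "conflation B A Bm C x y \<longleftrightarrow> x \<in> hom B A Bm \<and> y \<in> hom B Bm C \<and>
     (\<exists>d\<in>Ext B C A. realizes B d x y)"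

definition projective :: "('o,'m,'e) extri \<Rightarrow> 'o \<Rightarrow> bool" where
  "projective B P \<longleftrightarrow> P \<in> Ob B \<and>
     (\<forall>A Bm C x y c. conflation B A Bm C x y \<longrightarrow> c \<in> hom B P C \<longrightarrow>
        (\<exists>b\<in>hom B P Bm. cmp B y b = c))"

definition injective :: "('o,'m,'e) extri \<Rightarrow> 'o \<Rightarrow> bool" where
  "injective B I \<longleftrightarrow> I \<in> Ob B \<and>
     (\<forall>A Bm C x y a. conflation B A Bm C x y \<longrightarrow> a \<in> hom B A I \<longrightarrow>
        (\<exists>b\<in>hom B Bm I. cmp B b x = a))"

definition enough_projectives :: "('o,'m,'e) extri \<Rightarrow> bool" where
  "enough_projectives B \<longleftrightarrow>
     (\<forall>C\<in>Ob B. \<exists>A P x y. conflation B A P C x y \<and> projective B P)"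

definition enough_injectives :: "('o,'m,'e) extri \<Rightarrow> bool" where
  "enough_injectives B \<longleftrightarrow>
     (\<forall>A\<in>Ob B. \<exists>I C x y. conflation B A I C x y \<and> injective B I)"

text \<open>Subcategories: full, additive, closed under isomorphisms and finite direct sums
  (a subcategory is identified with its class of objects).\<close>
definition subcat :: "('o,'m,'e) extri \<Rightarrow> 'o set \<Rightarrow> bool" where
  "subcat B X \<longleftrightarrow> X \<subseteq> Ob B \<and>
     (\<forall>Y Y' f. Y \<in> X \<longrightarrow> iso B f Y Y' \<longrightarrow> Y' \<in> X) \<and>
     (\<exists>Z. is_zero_obj B Z \<and> Z \<in> X) \<and>
     (\<forall>Y1 Y2 S i1 i2 p1 p2. Y1 \<in> X \<longrightarrow> Y2 \<in> X \<longrightarrow> is_biprod B Y1 Y2 S i1 i2 p1 p2 \<longrightarrow> S \<in> X)"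

definition closed_summands :: "('o,'m,'e) extri \<Rightarrow> 'o set \<Rightarrow> bool" where
  "closed_summands B X \<longleftrightarrow>
     (\<forall>Y1 Y2 S i1 i2 p1 p2. S \<in> X \<longrightarrow> is_biprod B Y1 Y2 S i1 i2 p1 p2 \<longrightarrow> Y1 \<in> X \<and> Y2 \<in> X)"

definition Ext_zero :: "('o,'m,'e) extri \<Rightarrow> 'o \<Rightarrow> 'o \<Rightarrow> bool" where
  "Ext_zero B C A \<longleftrightarrow> Ext B C A = {ezero B C A}"

definition perp1 :: "('o,'m,'e) extri \<Rightarrow> 'o set \<Rightarrow> 'o set" where
  "perp1 B X = {Y \<in> Ob B. \<forall>C\<in>X. Ext_zero B C Y}"

definition Omega :: "('o,'m,'e) extri \<Rightarrow> 'o set \<Rightarrow> 'o set" where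
  "Omega B X = {U. \<exists>P C x y. conflation B U P C x y \<and> projective B P \<and> C \<in> X}"

definition cotorsion_pair :: "('o,'m,'e) extri \<Rightarrow> 'o set \<Rightarrow> 'o set \<Rightarrow> bool" where
  "cotorsion_pair B U V \<longleftrightarrow>
     subcat B U \<and> subcat B V \<and> closed_summands B U \<and> closed_summands B V \<and>
     (\<forall>X\<in>U. \<forall>Y\<in>V. Ext_zero B X Y) \<and>
     (\<forall>X\<in>Ob B.
        (\<exists>VX UX x y. conflation B VX UX X x y \<and> VX \<in> V \<and> UX \<in> U) \<and>
        (\<exists>VX UX x y. conflation B X VX UX x y \<and> VX \<in> V \<and> UX \<in> U))"

definition right_approx :: "('o,'m,'e) extri \<Rightarrow> 'o set \<Rightarrow> 'm \<Rightarrow> 'o \<Rightarrow> 'o \<Rightarrow> bool" where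
  "right_approx B Xs f U X \<longleftrightarrow> U \<in> Xs \<and> f \<in> hom B U X \<and>
     (\<forall>U'\<in>Xs. \<forall>h\<in>hom B U' X. \<exists>k\<in>hom B U' U. cmp B f k = h)"

end

theory Submission imports Defs begin

lemma ex_cat: "extriangulated B \<Longrightarrow> category B"
  unfolding extriangulated_def additive_def preadditive_def by blast
lemma ex_pre: "extriangulated B \<Longrightarrow> preadditive B"
  unfolding extriangulated_def additive_def by blast
lemma ex_ET1: "extriangulated B \<Longrightarrow> ET1 B"
  unfolding extriangulated_def by blast
lemma ex_ET2: "extriangulated B \<Longrightarrow> ET2 B"
  unfolding extriangulated_def by blast
lemma ex_ET3: "extriangulated B \<Longrightarrow> ET3 B"
  unfolding extriangulated_def by blast
lemma ex_ET4op: "extriangulated B \<Longrightarrow> ET4op B"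
  unfolding extriangulated_def by blast

lemma hom_Ob: assumes "extriangulated B" "f \<in> hom B X Y" shows "X \<in> Ob B" "Y \<in> Ob B"
  using ex_cat[OF assms(1)] assms(2) unfolding category_def hom_def by auto
lemma comp_hom: assumes "extriangulated B" "f \<in> hom B X Y" "g \<in> hom B Y Z"
  shows "cmp B g f \<in> hom B X Z"
  using ex_cat[OF assms(1)] assms(2,3) unfolding category_def by blast
lemma id_hom: assumes "extriangulated B" "X \<in> Ob B" shows "idm B X \<in> hom B X X"
  using ex_cat[OF assms(1)] assms(2) unfolding category_def by blast
lemma id_r: assumes "extriangulated B" "f \<in> hom B X Y" shows "cmp B f (idm B X) = f"
  using ex_cat[OF assms(1)] assms(2) unfolding category_def by blast
lemma id_l: assumes "extriangulated B" "f \<in> hom B X Y" shows "cmp B (idm B Y) f = f"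
  using ex_cat[OF assms(1)] assms(2) unfolding category_def by blast
lemma assoc: assumes "extriangulated B" "f \<in> hom B W X" "g \<in> hom B X Y" "h \<in> hom B Y Z"
  shows "cmp B h (cmp B g f) = cmp B (cmp B h g) f"
  using ex_cat[OF assms(1)] assms(2-4) unfolding category_def by blast

lemma pre_XY: assumes "extriangulated B" "X \<in> Ob B" "Y \<in> Ob B"
  shows "mzero B X Y \<in> hom B X Y \<and>
        (\<forall>f\<in>hom B X Y. \<forall>g\<in>hom B X Y. madd B f g \<in> hom B X Y) \<and>
        (\<forall>f\<in>hom B X Y. mneg B f \<in> hom B X Y) \<and>
        (\<forall>f\<in>hom B X Y. \<forall>g\<in>hom B X Y. \<forall>h\<in>hom B X Y.
            madd B (madd B f g) h = madd B f (madd B g h)) \<and>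
        (\<forall>f\<in>hom B X Y. \<forall>g\<in>hom B X Y. madd B f g = madd B g f) \<and>
        (\<forall>f\<in>hom B X Y. madd B f (mzero B X Y) = f) \<and>
        (\<forall>f\<in>hom B X Y. madd B f (mneg B f) = mzero B X Y)"
proof -
  have "preadditive B" using ex_pre[OF assms(1)] .
  then have H: "\<forall>X\<in>Ob B. \<forall>Y\<in>Ob B.
        mzero B X Y \<in> hom B X Y \<and>
        (\<forall>f\<in>hom B X Y. \<forall>g\<in>hom B X Y. madd B f g \<in> hom B X Y) \<and>
        (\<forall>f\<in>hom B X Y. mneg B f \<in> hom B X Y) \<and>
        (\<forall>f\<in>hom B X Y. \<forall>g\<in>hom B X Y. \<forall>h\<in>hom B X Y.
            madd B (madd B f g) h = madd B f (madd B g h)) \<and>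
        (\<forall>f\<in>hom B X Y. \<forall>g\<in>hom B X Y. madd B f g = madd B g f) \<and>
        (\<forall>f\<in>hom B X Y. madd B f (mzero B X Y) = f) \<and>
        (\<forall>f\<in>hom B X Y. madd B f (mneg B f) = mzero B X Y)"
    unfolding preadditive_def by (rule conjunct1[OF conjunct2])
  show ?thesis by (rule bspec[OF bspec[OF H assms(2)] assms(3)])
qed

lemma dists: assumes "extriangulated B"
  shows "(\<forall>X Y Z f g g'. f \<in> hom B X Y \<longrightarrow> g \<in> hom B Y Z \<longrightarrow> g' \<in> hom B Y Z \<longrightarrow>
        cmp B (madd B g g') f = madd B (cmp B g f) (cmp B g' f)) \<and>
     (\<forall>X Y Z f f' h. f \<in> hom B X Y \<longrightarrow> f' \<in> hom B X Y \<longrightarrow> h \<in> hom B Y Z \<longrightarrow>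
        cmp B h (madd B f f') = madd B (cmp B h f) (cmp B h f'))"
proof -
  have "preadditive B" using ex_pre[OF assms(1)] .
  then show ?thesis unfolding preadditive_def by (rule conjunct2[OF conjunct2])
qed

lemma zero_hom: assumes "extriangulated B" "X \<in> Ob B" "Y \<in> Ob B" shows "mzero B X Y \<in> hom B X Y"
  using pre_XY[OF assms] by blast
lemma madd_hom: assumes "extriangulated B" "f \<in> hom B X Y" "g \<in> hom B X Y" shows "madd B f g \<in> hom B X Y"
  using pre_XY[OF assms(1) hom_Ob[OF assms(1,2)]] assms(2,3) by blast
lemma mneg_hom: assumes "extriangulated B" "f \<in> hom B X Y" shows "mneg B f \<in> hom B X Y"
  using pre_XY[OF assms(1) hom_Ob[OF assms(1,2)]] assms(2) by blast
lemma madd_assoc: assumes "extriangulated B" "f \<in> hom B X Y" "g \<in> hom B X Y" "h \<in> hom B X Y"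
  shows "madd B (madd B f g) h = madd B f (madd B g h)"
  using pre_XY[OF assms(1) hom_Ob[OF assms(1,2)]] assms(2-4) by blast
lemma madd_comm: assumes "extriangulated B" "f \<in> hom B X Y" "g \<in> hom B X Y"
  shows "madd B f g = madd B g f"
  using pre_XY[OF assms(1) hom_Ob[OF assms(1,2)]] assms(2-3) by blast
lemma madd_0: assumes "extriangulated B" "f \<in> hom B X Y" shows "madd B f (mzero B X Y) = f"
  using pre_XY[OF assms(1) hom_Ob[OF assms(1,2)]] assms(2) by blast
lemma madd_neg: assumes "extriangulated B" "f \<in> hom B X Y" shows "madd B f (mneg B f) = mzero B X Y"
  using pre_XY[OF assms(1) hom_Ob[OF assms(1,2)]] assms(2) by blast
lemma dist_r: assumes "extriangulated B" "f \<in> hom B X Y" "g \<in> hom B Y Z" "g' \<in> hom B Y Z"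
  shows "cmp B (madd B g g') f = madd B (cmp B g f) (cmp B g' f)"
  using dists[OF assms(1)] assms(2-4) by blast
lemma dist_l: assumes "extriangulated B" "f \<in> hom B X Y" "f' \<in> hom B X Y" "h \<in> hom B Y Z"
  shows "cmp B h (madd B f f') = madd B (cmp B h f) (cmp B h f')"
  using dists[OF assms(1)] assms(2-4) by blast

lemma idem_zero: assumes "extriangulated B" "z \<in> hom B X Y" "z = madd B z z" shows "z = mzero B X Y"
proof -
  have "z = madd B z (mzero B X Y)" using madd_0[OF assms(1,2)] by simp
  also have "\<dots> = madd B z (madd B z (mneg B z))" using madd_neg[OF assms(1,2)] by simp
  also have "\<dots> = madd B (madd B z z) (mneg B z)" using madd_assoc[OF assms(1,2,2) mneg_hom[OF assms(1,2)]] by simp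
  also have "\<dots> = mzero B X Y" using assms(3) madd_neg[OF assms(1,2)] by simp
  finally show ?thesis .
qed

lemma comp_zero_r: assumes "extriangulated B" "X \<in> Ob B" "g \<in> hom B Y Z"
  shows "cmp B g (mzero B X Y) = mzero B X Z"
proof -
  have Y: "Y \<in> Ob B" using hom_Ob[OF assms(1,3)] by simp
  have z: "mzero B X Y \<in> hom B X Y" using zero_hom[OF assms(1,2) Y] .
  have "cmp B g (mzero B X Y) = cmp B g (madd B (mzero B X Y) (mzero B X Y))"
    using madd_0[OF assms(1) z] by simp
  also have "\<dots> = madd B (cmp B g (mzero B X Y)) (cmp B g (mzero B X Y))"
    using dist_l[OF assms(1) z z assms(3)] .
  finally show ?thesis using idem_zero[OF assms(1) comp_hom[OF assms(1) z assms(3)]] by simp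
qed

lemma comp_zero_l: assumes "extriangulated B" "Z \<in> Ob B" "f \<in> hom B X Y"
  shows "cmp B (mzero B Y Z) f = mzero B X Z"
proof -
  have Y: "Y \<in> Ob B" using hom_Ob[OF assms(1,3)] by simp
  have z: "mzero B Y Z \<in> hom B Y Z" using zero_hom[OF assms(1) Y assms(2)] .
  have "cmp B (mzero B Y Z) f = cmp B (madd B (mzero B Y Z) (mzero B Y Z)) f"
    using madd_0[OF assms(1) z] by simp
  also have "\<dots> = madd B (cmp B (mzero B Y Z) f) (cmp B (mzero B Y Z) f)"
    using dist_r[OF assms(1) assms(3) z z] .
  finally show ?thesis using idem_zero[OF assms(1) comp_hom[OF assms(1) assms(3) z]] by simp
qed

lemma ET1D: assumes "extriangulated B" shows "
     (\<forall>C\<in>Ob B. \<forall>A\<in>Ob B.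
        ezero B C A \<in> Ext B C A \<and>
        (\<forall>d\<in>Ext B C A. \<forall>d'\<in>Ext B C A. eadd B C A d d' \<in> Ext B C A) \<and>
        (\<forall>d\<in>Ext B C A. eneg B C A d \<in> Ext B C A) \<and>
        (\<forall>d\<in>Ext B C A. \<forall>d'\<in>Ext B C A. \<forall>d''\<in>Ext B C A.
           eadd B C A (eadd B C A d d') d'' = eadd B C A d (eadd B C A d' d'')) \<and>
        (\<forall>d\<in>Ext B C A. \<forall>d'\<in>Ext B C A. eadd B C A d d' = eadd B C A d' d) \<and>
        (\<forall>d\<in>Ext B C A. eadd B C A d (ezero B C A) = d) \<and>
        (\<forall>d\<in>Ext B C A. eadd B C A d (eneg B C A d) = ezero B C A))"
  "(\<forall>C A A' a d. C \<in> Ob B \<longrightarrow> a \<in> hom B A A' \<longrightarrow> d \<in> Ext B C A \<longrightarrow>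
        push B C a d \<in> Ext B C A')"
  "(\<forall>A C C' c d. A \<in> Ob B \<longrightarrow> c \<in> hom B C' C \<longrightarrow> d \<in> Ext B C A \<longrightarrow>
        pull B A c d \<in> Ext B C' A)"
  "(\<forall>C A d. C \<in> Ob B \<longrightarrow> A \<in> Ob B \<longrightarrow> d \<in> Ext B C A \<longrightarrow>
        push B C (idm B A) d = d \<and> pull B A (idm B C) d = d)"
  "(\<forall>A C C' C'' c c' d. A \<in> Ob B \<longrightarrow> c \<in> hom B C' C \<longrightarrow> c' \<in> hom B C'' C' \<longrightarrow>
        d \<in> Ext B C A \<longrightarrow> pull B A (cmp B c c') d = pull B A c' (pull B A c d))"
  "(\<forall>A C C' c d d'. A \<in> Ob B \<longrightarrow> c \<in> hom B C' C \<longrightarrow> d \<in> Ext B C A \<longrightarrow> d' \<in> Ext B C A \<longrightarrow>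
        pull B A c (eadd B C A d d') = eadd B C' A (pull B A c d) (pull B A c d'))"
proof -
  have E: "ET1 B" using ex_ET1[OF assms] .
  note F = E[unfolded ET1_def]
  show "(\<forall>C\<in>Ob B. \<forall>A\<in>Ob B.
        ezero B C A \<in> Ext B C A \<and>
        (\<forall>d\<in>Ext B C A. \<forall>d'\<in>Ext B C A. eadd B C A d d' \<in> Ext B C A) \<and>
        (\<forall>d\<in>Ext B C A. eneg B C A d \<in> Ext B C A) \<and>
        (\<forall>d\<in>Ext B C A. \<forall>d'\<in>Ext B C A. \<forall>d''\<in>Ext B C A.
           eadd B C A (eadd B C A d d') d'' = eadd B C A d (eadd B C A d' d'')) \<and>
        (\<forall>d\<in>Ext B C A. \<forall>d'\<in>Ext B C A. eadd B C A d d' = eadd B C A d' d) \<and>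
        (\<forall>d\<in>Ext B C A. eadd B C A d (ezero B C A) = d) \<and>
        (\<forall>d\<in>Ext B C A. eadd B C A d (eneg B C A d) = ezero B C A))"
    by (rule F[THEN conjunct1])
  show "(\<forall>C A A' a d. C \<in> Ob B \<longrightarrow> a \<in> hom B A A' \<longrightarrow> d \<in> Ext B C A \<longrightarrow>
        push B C a d \<in> Ext B C A')" by (rule F[THEN conjunct2, THEN conjunct1])
  show "(\<forall>A C C' c d. A \<in> Ob B \<longrightarrow> c \<in> hom B C' C \<longrightarrow> d \<in> Ext B C A \<longrightarrow>
        pull B A c d \<in> Ext B C' A)" by (rule F[THEN conjunct2, THEN conjunct2, THEN conjunct1])
  show "(\<forall>C A d. C \<in> Ob B \<longrightarrow> A \<in> Ob B \<longrightarrow> d \<in> Ext B C A \<longrightarrow>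
        push B C (idm B A) d = d \<and> pull B A (idm B C) d = d)"
    by (rule F[THEN conjunct2, THEN conjunct2, THEN conjunct2, THEN conjunct1])
  show "(\<forall>A C C' C'' c c' d. A \<in> Ob B \<longrightarrow> c \<in> hom B C' C \<longrightarrow> c' \<in> hom B C'' C' \<longrightarrow>
        d \<in> Ext B C A \<longrightarrow> pull B A (cmp B c c') d = pull B A c' (pull B A c d))"
    by (rule F[THEN conjunct2, THEN conjunct2, THEN conjunct2, THEN conjunct2, THEN conjunct2, THEN conjunct1])
  show "(\<forall>A C C' c d d'. A \<in> Ob B \<longrightarrow> c \<in> hom B C' C \<longrightarrow> d \<in> Ext B C A \<longrightarrow> d' \<in> Ext B C A \<longrightarrow>
        pull B A c (eadd B C A d d') = eadd B C' A (pull B A c d) (pull B A c d'))"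
    by (rule F[THEN conjunct2, THEN conjunct2, THEN conjunct2, THEN conjunct2, THEN conjunct2,
          THEN conjunct2, THEN conjunct2, THEN conjunct2, THEN conjunct1])
qed

lemma ext_grp: assumes "extriangulated B" "C \<in> Ob B" "A \<in> Ob B"
  shows "ezero B C A \<in> Ext B C A \<and>
        (\<forall>d\<in>Ext B C A. \<forall>d'\<in>Ext B C A. eadd B C A d d' \<in> Ext B C A) \<and>
        (\<forall>d\<in>Ext B C A. eneg B C A d \<in> Ext B C A) \<and>
        (\<forall>d\<in>Ext B C A. \<forall>d'\<in>Ext B C A. \<forall>d''\<in>Ext B C A.
           eadd B C A (eadd B C A d d') d'' = eadd B C A d (eadd B C A d' d'')) \<and>
        (\<forall>d\<in>Ext B C A. \<forall>d'\<in>Ext B C A. eadd B C A d d' = eadd B C A d' d) \<and>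
        (\<forall>d\<in>Ext B C A. eadd B C A d (ezero B C A) = d) \<and>
        (\<forall>d\<in>Ext B C A. eadd B C A d (eneg B C A d) = ezero B C A)"
  by (rule bspec[OF bspec[OF ET1D(1)[OF assms(1)] assms(2)] assms(3)])

lemma ezero_Ext: assumes "extriangulated B" "C \<in> Ob B" "A \<in> Ob B" shows "ezero B C A \<in> Ext B C A"
  using ext_grp[OF assms] by blast

lemma push_Ext: assumes "extriangulated B" "C \<in> Ob B" "a \<in> hom B A A'" "d \<in> Ext B C A"
  shows "push B C a d \<in> Ext B C A'" using ET1D(2)[OF assms(1)] assms(2-4) by blast
lemma pull_Ext: assumes "extriangulated B" "A \<in> Ob B" "c \<in> hom B C' C" "d \<in> Ext B C A"
  shows "pull B A c d \<in> Ext B C' A" using ET1D(3)[OF assms(1)] assms(2-4) by blast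
lemma push_id: assumes "extriangulated B" "C \<in> Ob B" "A \<in> Ob B" "d \<in> Ext B C A"
  shows "push B C (idm B A) d = d" using ET1D(4)[OF assms(1)] assms(2-4) by blast
lemma pull_id: assumes "extriangulated B" "C \<in> Ob B" "A \<in> Ob B" "d \<in> Ext B C A"
  shows "pull B A (idm B C) d = d" using ET1D(4)[OF assms(1)] assms(2-4) by blast
lemma pull_comp: assumes "extriangulated B" "A \<in> Ob B" "c \<in> hom B C' C" "c' \<in> hom B C'' C'" "d \<in> Ext B C A"
  shows "pull B A (cmp B c c') d = pull B A c' (pull B A c d)" using ET1D(5)[OF assms(1)] assms(2-5) by blast

lemma pull_zero: assumes "extriangulated B" "A \<in> Ob B" "c \<in> hom B C' C"
  shows "pull B A c (ezero B C A) = ezero B C' A"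
proof -
  have C: "C \<in> Ob B" and C': "C' \<in> Ob B" using hom_Ob[OF assms(1,3)] by auto
  note G = ext_grp[OF assms(1) C assms(2)]
  note G' = ext_grp[OF assms(1) C' assms(2)]
  have z: "ezero B C A \<in> Ext B C A" using G by blast
  define w where "w = pull B A c (ezero B C A)"
  have w: "w \<in> Ext B C' A" unfolding w_def using pull_Ext[OF assms(1,2,3) z] .
  have "eadd B C A (ezero B C A) (ezero B C A) = ezero B C A" using G z by blast
  then have ww: "w = eadd B C' A w w" unfolding w_def
    using ET1D(6)[OF assms(1)] assms(2,3) z by metis
  have n: "eneg B C' A w \<in> Ext B C' A" using G' w by blast
  have u: "eadd B C' A w (ezero B C' A) = w" using G' w by blast
  have i: "eadd B C' A w (eneg B C' A w) = ezero B C' A" using G' w by blast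
  have asc: "eadd B C' A (eadd B C' A w w) (eneg B C' A w) = eadd B C' A w (eadd B C' A w (eneg B C' A w))"
    using G' w n by blast
  have "w = eadd B C' A (eadd B C' A w w) (eneg B C' A w)" using asc i u by simp
  also have "\<dots> = ezero B C' A" using ww[symmetric] i by simp
  finally show ?thesis unfolding w_def .
qed


lemma ex_add: "extriangulated B \<Longrightarrow> additive B"
  unfolding extriangulated_def by blast

lemma zero_obj: assumes "extriangulated B" obtains Z where "is_zero_obj B Z"
  using ex_add[OF assms] unfolding additive_def by blast

lemma biprod_ex: assumes "extriangulated B" "X \<in> Ob B" "Y \<in> Ob B"
  obtains S i1 i2 p1 p2 where "is_biprod B X Y S i1 i2 p1 p2"
  using ex_add[OF assms(1)] assms(2,3) unfolding additive_def by blast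

lemma ET2_mor: assumes "extriangulated B"
  "x \<in> hom B A M" "y \<in> hom B M C" "x' \<in> hom B A' M'" "y' \<in> hom B M' C'"
  "realizes B d x y" "realizes B d' x' y'" "a \<in> hom B A A'" "c \<in> hom B C C'"
  "push B C a d = pull B A' c d'"
  shows "\<exists>b\<in>hom B M M'. cmp B b x = cmp B x' a \<and> cmp B y' b = cmp B c y"
proof -
  have "(\<forall>A Bm C A' Bm' C' x y x' y' d d' a c.
        x \<in> hom B A Bm \<longrightarrow> y \<in> hom B Bm C \<longrightarrow> x' \<in> hom B A' Bm' \<longrightarrow> y' \<in> hom B Bm' C' \<longrightarrow>
        realizes B d x y \<longrightarrow> realizes B d' x' y' \<longrightarrow>
        a \<in> hom B A A' \<longrightarrow> c \<in> hom B C C' \<longrightarrow> push B C a d = pull B A' c d' \<longrightarrow>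
        (\<exists>b\<in>hom B Bm Bm'. cmp B b x = cmp B x' a \<and> cmp B y' b = cmp B c y))"
    using ex_ET2[OF assms(1)] unfolding ET2_def
    by (rule conjunct2[THEN conjunct2, THEN conjunct2, THEN conjunct2, THEN conjunct1])
  then show ?thesis using assms(2-10) by blast
qed

lemma ET2_split: assumes "extriangulated B" "A \<in> Ob B" "C \<in> Ob B" "is_biprod B A C S i1 i2 p1 p2"
  shows "realizes B (ezero B C A) i1 p2"
proof -
  have "(\<forall>A C S i1 i2 p1 p2. A \<in> Ob B \<longrightarrow> C \<in> Ob B \<longrightarrow> is_biprod B A C S i1 i2 p1 p2 \<longrightarrow>
        realizes B (ezero B C A) i1 p2)"
    using ex_ET2[OF assms(1)] unfolding ET2_def
    by (rule conjunct2[THEN conjunct2, THEN conjunct2, THEN conjunct2, THEN conjunct2, THEN conjunct1])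
  then show ?thesis using assms(2-4) by blast
qed

lemma ET3_mor: assumes "extriangulated B"
  "x \<in> hom B A M" "y \<in> hom B M C" "x' \<in> hom B A' M'" "y' \<in> hom B M' C'"
  "realizes B d x y" "realizes B d' x' y'" "a \<in> hom B A A'" "b \<in> hom B M M'"
  "cmp B b x = cmp B x' a"
  shows "\<exists>c\<in>hom B C C'. cmp B c y = cmp B y' b \<and> push B C a d = pull B A' c d'"
  using ex_ET3[OF assms(1)] assms(2-10) unfolding ET3_def by blast

lemma ET4op_ax: assumes "extriangulated B"
  "f \<in> hom B D A" "f' \<in> hom B A Bo" "g \<in> hom B F Bo" "g' \<in> hom B Bo C"
  "realizes B d f f'" "realizes B d' g g'"
  shows "\<exists>E h dd e d''. E \<in> Ob B \<and> h \<in> hom B E A \<and> dd \<in> hom B D E \<and> e \<in> hom B E F \<and>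
           d'' \<in> Ext B C E \<and>
           realizes B d'' h (cmp B g' f') \<and>
           realizes B (pull B D g d) dd e \<and>
           d' = push B C e d'' \<and>
           push B Bo dd d = pull B E g' d'' \<and>
           cmp B h dd = f \<and> cmp B f' h = cmp B g e"
  using ex_ET4op[OF assms(1)] assms(2-7) unfolding ET4op_def by blast


lemma yx_zero: assumes E: "extriangulated B" and x: "x \<in> hom B A M" and y: "y \<in> hom B M C"
  and r: "realizes B d x y"
  shows "cmp B y x = mzero B A C"
proof -
  obtain Z where Z: "is_zero_obj B Z" using zero_obj[OF E] by blast
  have Zo: "Z \<in> Ob B" using Z unfolding is_zero_obj_def by blast
  have A: "A \<in> Ob B" using hom_Ob[OF E x] by simp
  have C: "C \<in> Ob B" using hom_Ob[OF E y] by simp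
  have zA: "mzero B Z A \<in> hom B Z A" using zero_hom[OF E Zo A] .
  have Az: "mzero B A Z \<in> hom B A Z" using zero_hom[OF E A Zo] .
  have iA: "idm B A \<in> hom B A A" using id_hom[OF E A] .
  have hZZ: "hom B Z Z = {mzero B Z Z}" using Z Zo unfolding is_zero_obj_def by blast
  have c1: "cmp B (mzero B A Z) (mzero B Z A) = idm B Z"
    using comp_hom[OF E zA Az] id_hom[OF E Zo] hZZ by simp
  have c2: "cmp B (mzero B Z A) (mzero B A Z) = mzero B A A"
    using comp_zero_l[OF E A Az] .
  have bp: "is_biprod B A Z A (idm B A) (mzero B Z A) (idm B A) (mzero B A Z)"
    unfolding is_biprod_def using A iA zA Az c1 c2 id_r[OF E iA] id_l[OF E zA] id_r[OF E Az]
      madd_0[OF E iA] by simp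
  have rs: "realizes B (ezero B Z A) (idm B A) (mzero B A Z)"
    using ET2_split[OF E A Zo bp] .
  obtain c where c: "c \<in> hom B Z C" "cmp B c (mzero B A Z) = cmp B y x"
    using ET3_mor[OF E iA Az x y rs r iA x refl] by blast
  show ?thesis using c comp_zero_r[OF E A c(1)] by simp
qed

lemma pull_defl: assumes E: "extriangulated B" and x: "x \<in> hom B A M" and y: "y \<in> hom B M C"
  and r: "realizes B d x y" and d: "d \<in> Ext B C A"
  shows "pull B A y d = ezero B M A"
proof -
  have A: "A \<in> Ob B" using hom_Ob[OF E x] by simp
  have M: "M \<in> Ob B" using hom_Ob[OF E x] by simp
  have C: "C \<in> Ob B" using hom_Ob[OF E y] by simp
  obtain S i1 i2 p1 p2 where bp: "is_biprod B A M S i1 i2 p1 p2" using biprod_ex[OF E A M] by blast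
  have i1: "i1 \<in> hom B A S" and i2: "i2 \<in> hom B M S" and p1: "p1 \<in> hom B S A"
    and p2: "p2 \<in> hom B S M" and e11: "cmp B p1 i1 = idm B A" and e22: "cmp B p2 i2 = idm B M"
    and e21: "cmp B p2 i1 = mzero B A M"
    using bp unfolding is_biprod_def by auto
  have rs: "realizes B (ezero B M A) i1 p2" using ET2_split[OF E A M bp] .
  have xp1: "cmp B x p1 \<in> hom B S M" using comp_hom[OF E p1 x] .
  define b where "b = madd B (cmp B x p1) p2"
  have b: "b \<in> hom B S M" unfolding b_def using madd_hom[OF E xp1 p2] .
  have "cmp B b i1 = madd B (cmp B (cmp B x p1) i1) (cmp B p2 i1)"
    unfolding b_def using dist_r[OF E i1 xp1 p2] .
  also have "cmp B (cmp B x p1) i1 = x"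
    using assoc[OF E i1 p1 x] e11 id_r[OF E x] by simp
  finally have bi1: "cmp B b i1 = cmp B x (idm B A)"
    using e21 madd_0[OF E x] id_r[OF E x] by simp
  obtain c where c: "c \<in> hom B M C" "cmp B c p2 = cmp B y b"
    "push B M (idm B A) (ezero B M A) = pull B A c d"
    using ET3_mor[OF E i1 p2 x y rs r id_hom[OF E A] b bi1] by blast
  have yx: "cmp B y x = mzero B A C" using yx_zero[OF E x y r] .
  have "cmp B y b = madd B (cmp B y (cmp B x p1)) (cmp B y p2)"
    unfolding b_def using dist_l[OF E xp1 p2 y] .
  also have "cmp B y (cmp B x p1) = mzero B S C"
    using assoc[OF E p1 x y] yx comp_zero_l[OF E C p1] by simp
  finally have yb: "cmp B y b = cmp B y p2"
    using madd_comm[OF E zero_hom[OF E hom_Ob(1)[OF E p1] C] comp_hom[OF E p2 y]]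
      madd_0[OF E comp_hom[OF E p2 y]] by simp
  have "c = cmp B c (cmp B p2 i2)" using e22 id_r[OF E c(1)] by simp
  also have "\<dots> = cmp B (cmp B y p2) i2" using assoc[OF E i2 p2 c(1)] c(2) yb by simp
  also have "\<dots> = y" using assoc[OF E i2 p2 y] e22 id_r[OF E y] by simp
  finally have "c = y" .
  then show ?thesis using c(3) push_id[OF E M A ezero_Ext[OF E M A]] by simp
qed

lemma fact_F: assumes E: "extriangulated B" and x: "x \<in> hom B A M" and y: "y \<in> hom B M C"
  and r: "realizes B d x y" and w: "w \<in> hom B A W" and z: "push B C w d = ezero B C W"
  shows "\<exists>\<phi>\<in>hom B M W. cmp B \<phi> x = w"
proof -
  have W: "W \<in> Ob B" using hom_Ob[OF E w] by simp
  have C: "C \<in> Ob B" using hom_Ob[OF E y] by simp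
  obtain S i1 i2 p1 p2 where bp: "is_biprod B W C S i1 i2 p1 p2" using biprod_ex[OF E W C] by blast
  have i1: "i1 \<in> hom B W S" and p2: "p2 \<in> hom B S C" and p1: "p1 \<in> hom B S W"
    and e11: "cmp B p1 i1 = idm B W"
    using bp unfolding is_biprod_def by auto
  have rs: "realizes B (ezero B C W) i1 p2" using ET2_split[OF E W C bp] .
  have pz: "push B C w d = pull B W (idm B C) (ezero B C W)"
    using z pull_id[OF E C W ezero_Ext[OF E C W]] by simp
  obtain b where b: "b \<in> hom B M S" "cmp B b x = cmp B i1 w"
    using ET2_mor[OF E x y i1 p2 r rs w id_hom[OF E C] pz] by blast
  have "cmp B (cmp B p1 b) x = cmp B p1 (cmp B i1 w)" using assoc[OF E x b(1) p1] b(2) by simp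
  also have "\<dots> = w" using assoc[OF E w i1 p1] e11 id_l[OF E w] by simp
  finally show ?thesis using comp_hom[OF E b(1) p1] by blast
qed

lemma fact_G: assumes E: "extriangulated B" and x: "x \<in> hom B A M" and y: "y \<in> hom B M C"
  and r: "realizes B d x y" and w: "w \<in> hom B W C" and z: "pull B A w d = ezero B W A"
  shows "\<exists>\<psi>\<in>hom B W M. cmp B y \<psi> = w"
proof -
  have W: "W \<in> Ob B" using hom_Ob[OF E w] by simp
  have A: "A \<in> Ob B" using hom_Ob[OF E x] by simp
  obtain S i1 i2 p1 p2 where bp: "is_biprod B A W S i1 i2 p1 p2" using biprod_ex[OF E A W] by blast
  have i1: "i1 \<in> hom B A S" and p2: "p2 \<in> hom B S W" and i2: "i2 \<in> hom B W S"
    and e22: "cmp B p2 i2 = idm B W"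
    using bp unfolding is_biprod_def by auto
  have rs: "realizes B (ezero B W A) i1 p2" using ET2_split[OF E A W bp] .
  have pz: "push B W (idm B A) (ezero B W A) = pull B A w d"
    using z push_id[OF E W A ezero_Ext[OF E W A]] by simp
  obtain b where b: "b \<in> hom B S M" "cmp B y b = cmp B w p2"
    using ET2_mor[OF E i1 p2 x y rs r id_hom[OF E A] w pz] by blast
  have "cmp B y (cmp B b i2) = cmp B w (cmp B p2 i2)"
    using assoc[OF E i2 b(1) y] assoc[OF E i2 p2 w] b(2) by simp
  also have "\<dots> = w" using e22 id_r[OF E w] by simp
  finally show ?thesis using comp_hom[OF E i2 b(1)] by blast
qed


theorem mainTheorem6:
  fixes B :: "('o,'m,'e) extri" and \<C> :: "'o set" and X :: 'o
  assumes "extriangulated B"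
    and "enough_projectives B" and "enough_injectives B"
    and "cotorsion_pair B \<C> (perp1 B \<C>)"
    and "X \<in> Ob B"
  shows "\<exists>T0 C0 P0 Y0 U0 t s0 y0 p0 u0 v0 g0 f0.
           conflation B X T0 C0 t s0 \<and> T0 \<in> perp1 B \<C> \<and> C0 \<in> \<C> \<and>
           conflation B Y0 P0 T0 y0 p0 \<and> projective B P0 \<and>
           conflation B U0 P0 C0 u0 v0 \<and>
           conflation B Y0 U0 X g0 f0 \<and>
           cmp B u0 g0 = y0 \<and> cmp B t f0 = cmp B p0 u0 \<and>
           right_approx B (Omega B \<C>) f0 U0 X \<and>
           (\<forall>Z\<in>Ob B. Ext_zero B T0 Z \<longrightarrow>
              (\<forall>h\<in>hom B Y0 Z. \<exists>k\<in>hom B U0 Z. cmp B k g0 = h))"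
proof -
  note E = assms(1)
  obtain T0 C0 t s0 where c1: "conflation B X T0 C0 t s0" and T0: "T0 \<in> perp1 B \<C>" and C0: "C0 \<in> \<C>"
    using assms(4,5) unfolding cotorsion_pair_def by blast
  have t: "t \<in> hom B X T0" and s0: "s0 \<in> hom B T0 C0" using c1 unfolding conflation_def by auto
  obtain d' where d': "d' \<in> Ext B C0 X" "realizes B d' t s0" using c1 unfolding conflation_def by blast
  have T0o: "T0 \<in> Ob B" using hom_Ob[OF E t] by simp
  have C0o: "C0 \<in> Ob B" using hom_Ob[OF E s0] by simp
  obtain Y0 P0 y0 p0 where c2: "conflation B Y0 P0 T0 y0 p0" and P0: "projective B P0"
    using assms(2) T0o unfolding enough_projectives_def by blast
  have y0: "y0 \<in> hom B Y0 P0" and p0: "p0 \<in> hom B P0 T0" using c2 unfolding conflation_def by auto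
  obtain d where d: "d \<in> Ext B T0 Y0" "realizes B d y0 p0" using c2 unfolding conflation_def by blast
  have Y0o: "Y0 \<in> Ob B" using hom_Ob[OF E y0] by simp
  obtain U0 u0 g0 f0 d'' where U0: "U0 \<in> Ob B" and u0: "u0 \<in> hom B U0 P0" and g0: "g0 \<in> hom B Y0 U0"
    and f0: "f0 \<in> hom B U0 X" and d'': "d'' \<in> Ext B C0 U0" and r1: "realizes B d'' u0 (cmp B s0 p0)"
    and r2: "realizes B (pull B Y0 t d) g0 f0" and e1: "cmp B u0 g0 = y0" and e2: "cmp B p0 u0 = cmp B t f0"
    using ET4op_ax[OF E y0 p0 t s0 d(2) d'(2)] by blast
  have v0: "cmp B s0 p0 \<in> hom B P0 C0" using comp_hom[OF E p0 s0] .
  have c3: "conflation B U0 P0 C0 u0 (cmp B s0 p0)" unfolding conflation_def using u0 v0 d'' r1 by blast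
  have eps: "pull B Y0 t d \<in> Ext B X Y0" using pull_Ext[OF E Y0o t d(1)] .
  have c4: "conflation B Y0 U0 X g0 f0" unfolding conflation_def using g0 f0 eps r2 by blast
  have pd: "pull B Y0 p0 d = ezero B P0 Y0" using pull_defl[OF E y0 p0 d(2,1)] .
  have ra: "right_approx B (Omega B \<C>) f0 U0 X"
    unfolding right_approx_def
  proof (intro conjI ballI)
    show "U0 \<in> Omega B \<C>" unfolding Omega_def using c3 P0 C0 by blast
    show "f0 \<in> hom B U0 X" using f0 .
    fix U' h assume U': "U' \<in> Omega B \<C>" and h: "h \<in> hom B U' X"
    obtain P' C' a b where c5: "conflation B U' P' C' a b" and P': "projective B P'" and C': "C' \<in> \<C>"
      using U' unfolding Omega_def by blast
    have a: "a \<in> hom B U' P'" and b: "b \<in> hom B P' C'" using c5 unfolding conflation_def by auto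
    obtain \<delta> where \<delta>: "\<delta> \<in> Ext B C' U'" "realizes B \<delta> a b" using c5 unfolding conflation_def by blast
    have C'o: "C' \<in> Ob B" using hom_Ob[OF E b] by simp
    have th: "cmp B t h \<in> hom B U' T0" using comp_hom[OF E h t] .
    have ez: "Ext_zero B C' T0" using T0 C' unfolding perp1_def by blast
    have "push B C' (cmp B t h) \<delta> = ezero B C' T0"
      using push_Ext[OF E C'o th \<delta>(1)] ez unfolding Ext_zero_def by blast
    then obtain \<phi> where \<phi>: "\<phi> \<in> hom B P' T0" "cmp B \<phi> a = cmp B t h"
      using fact_F[OF E a b \<delta>(2) th] by blast
    obtain \<psi> where \<psi>: "\<psi> \<in> hom B P' P0" "cmp B p0 \<psi> = \<phi>"
      using P' c2 \<phi>(1) unfolding projective_def by blast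
    have "pull B Y0 h (pull B Y0 t d) = pull B Y0 (cmp B t h) d"
      using pull_comp[OF E Y0o t h d(1)] by simp
    also have "\<dots> = pull B Y0 a (pull B Y0 \<phi> d)"
      using pull_comp[OF E Y0o \<phi>(1) a d(1)] \<phi>(2) by simp
    also have "pull B Y0 \<phi> d = pull B Y0 \<psi> (pull B Y0 p0 d)"
      using pull_comp[OF E Y0o p0 \<psi>(1) d(1)] \<psi>(2) by simp
    also have "\<dots> = ezero B P' Y0" using pd pull_zero[OF E Y0o \<psi>(1)] by simp
    also have "pull B Y0 a (ezero B P' Y0) = ezero B U' Y0" using pull_zero[OF E Y0o a] .
    finally have "pull B Y0 h (pull B Y0 t d) = ezero B U' Y0" .
    then obtain k where "k \<in> hom B U' U0" "cmp B f0 k = h"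
      using fact_G[OF E g0 f0 r2 h] by blast
    then show "\<exists>k\<in>hom B U' U0. cmp B f0 k = h" by blast
  qed
  have last: "\<forall>Z\<in>Ob B. Ext_zero B T0 Z \<longrightarrow> (\<forall>h\<in>hom B Y0 Z. \<exists>k\<in>hom B U0 Z. cmp B k g0 = h)"
  proof (intro ballI impI)
    fix Z h assume Z: "Z \<in> Ob B" and ez: "Ext_zero B T0 Z" and h: "h \<in> hom B Y0 Z"
    have "push B T0 h d = ezero B T0 Z"
      using push_Ext[OF E T0o h d(1)] ez unfolding Ext_zero_def by blast
    then obtain \<phi> where \<phi>: "\<phi> \<in> hom B P0 Z" "cmp B \<phi> y0 = h"
      using fact_F[OF E y0 p0 d(2) h] by blast
    have "cmp B (cmp B \<phi> u0) g0 = h" using assoc[OF E g0 u0 \<phi>(1)] e1 \<phi>(2) by simp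
    then show "\<exists>k\<in>hom B U0 Z. cmp B k g0 = h" using comp_hom[OF E u0 \<phi>(1)] by blast
  qed
  show ?thesis
    apply (rule exI[of _ T0], rule exI[of _ C0], rule exI[of _ P0], rule exI[of _ Y0], rule exI[of _ U0])
    apply (rule exI[of _ t], rule exI[of _ s0], rule exI[of _ y0], rule exI[of _ p0], rule exI[of _ u0])
    apply (rule exI[of _ "cmp B s0 p0"], rule exI[of _ g0], rule exI[of _ f0])
    using c1 T0 C0 c2 P0 c3 c4 e1 e2 ra last by simp
qed

end
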